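(* Let $Q=q-E$ where $E\in\mathbb R$ and $q$ is a real random variable, symmetric about $0$, with $\mathbb E[\log(1+q^2)]<\infty$, $\mathbb E[q^2]>0$, and such that the distribution of $q^2$ is not supported on a single point. Let $\zeta\in\mathbb C^+$ satisfy $|\zeta|>1$, $\operatorname{Re}(\zeta+1/\zeta+E)=0$ and $\mathbb E[\log|\alpha(\zeta,q-E)|^2]=0$. Then $$\inf_{w\in\mathbb R}\ \mathbb E\Big[\log\frac{|\zeta|^2\,|w+1/\zeta-Q|^2}{|w-\zeta|^2}\Big]>0.$$
   Context: For $a\in\mathbb R$, $b>0$ and real $Q$, $\alpha(a+bi,Q)=\frac1b\big(a+\frac{a}{a^2+b^2}-Q\big)+\frac{i}{a^2+b^2}$. *)

theory Defs
  imports "HOL-Probability.Probability"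
begin

definition alpha :: "complex \<Rightarrow> real \<Rightarrow> complex" where
  "alpha z Q = Complex ((Re z + Re z / ((Re z)\<^sup>2 + (Im z)\<^sup>2) - Q) / Im z)
                       (1 / ((Re z)\<^sup>2 + (Im z)\<^sup>2))"

end

theory Submission
  imports Defs
begin


lemma lnconc:
  fixes w x y :: real
  assumes "0 \<le> w" "w \<le> 1" "x > 0" "y > 0"
  shows "w*ln x + (1-w)*ln y \<le> ln(w*x + (1-w)*y)"
  using assms ln_concave by (simp add: concave_on_iff)

lemma keyD1:
  fixes \<sigma> \<rho> \<epsilon> :: real
  assumes "0 < \<epsilon>" "\<epsilon> \<le> \<sigma>" "0 \<le> \<rho>"
  shows "ln \<epsilon> + 2*ln(\<sigma>+\<rho>) - ln \<sigma> \<le> ln((\<sigma>-\<rho>)\<^sup>2+4*\<rho>*\<epsilon>)"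
proof -
  have s: "\<sigma> > 0" using assms by linarith
  have p: "(\<sigma>-\<epsilon>)*(\<sigma>-\<rho>)\<^sup>2 \<ge> 0" using assms by simp
  have "\<epsilon>*(\<sigma>+\<rho>)\<^sup>2 \<le> \<sigma>*((\<sigma>-\<rho>)\<^sup>2+4*\<rho>*\<epsilon>)"
    using p by (simp add: power2_eq_square algebra_simps)
  hence "\<epsilon>*(\<sigma>+\<rho>)\<^sup>2 / \<sigma> \<le> (\<sigma>-\<rho>)\<^sup>2+4*\<rho>*\<epsilon>" using s by (simp add: divide_simps mult.commute)
  hence "ln (\<epsilon>*(\<sigma>+\<rho>)\<^sup>2 / \<sigma>) \<le> ln ((\<sigma>-\<rho>)\<^sup>2+4*\<rho>*\<epsilon>)"
    using s assms by (intro ln_mono) auto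
  moreover have "ln (\<epsilon>*(\<sigma>+\<rho>)\<^sup>2 / \<sigma>) = ln \<epsilon> + 2*ln(\<sigma>+\<rho>) - ln \<sigma>"
    using s assms by (simp add: ln_mult ln_div ln_realpow)
  ultimately show ?thesis by simp
qed

lemma keyD2:
  fixes \<sigma> \<rho> :: real
  assumes "0 < \<sigma>" "0 \<le> \<rho>"
  shows "ln \<sigma> / (1+\<rho>) \<le> ln(\<sigma>+\<rho>) - ln(1+\<rho>)"
proof -
  have "(1/(1+\<rho>))*ln \<sigma> + (1-1/(1+\<rho>))*ln 1 \<le> ln((1/(1+\<rho>))*\<sigma> + (1-1/(1+\<rho>))*1)"
    using assms by (intro lnconc) auto
  moreover have "(1/(1+\<rho>))*\<sigma> + (1-1/(1+\<rho>))*1 = (\<sigma>+\<rho>)/(1+\<rho>)"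
  proof -
    have "1+\<rho> > 0" using assms by simp
    thus ?thesis by (simp add: divide_simps)
  qed
  moreover have "ln ((\<sigma>+\<rho>)/(1+\<rho>)) = ln(\<sigma>+\<rho>) - ln(1+\<rho>)"
    using assms by (simp add: ln_div)
  ultimately show ?thesis by simp
qed

lemma keyK:
  fixes w x :: real
  assumes "0 < w" "w \<le> 1" "0 \<le> x"
  shows "min w (1-w) * ln (1 + x\<^sup>2/(4*(1+x))) \<le> ln(1+w*x) - w*ln(1+x)"
proof -
  have e: "ln (1 + x\<^sup>2/(4*(1+x))) = 2*ln(1+x/2) - ln(1+x)"
  proof -
    have "1 + x\<^sup>2/(4*(1+x)) = (1+x/2)\<^sup>2/(1+x)" using assms by (simp add: field_simps power2_eq_square)
    thus ?thesis using assms by (simp add: ln_div ln_realpow)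
  qed
  show ?thesis
  proof (cases "w \<le> 1/2")
    case True
    have "2*w*ln(1+x/2) = (2*w)*ln(1+x/2) + (1-2*w)*ln 1" by simp
    also have "\<dots> \<le> ln((2*w)*(1+x/2) + (1-2*w)*1)"
      using assms True by (intro lnconc) auto
    also have "(2*w)*(1+x/2) + (1-2*w)*1 = 1+w*x" by (simp add: algebra_simps)
    finally have "2*w*ln(1+x/2) \<le> ln(1+w*x)" .
    moreover have "min w (1-w) = w" using True by simp
    ultimately show ?thesis unfolding e by (simp add: algebra_simps)
  next
    case False
    have "(2*w-1)*ln(1+x) + (2-2*w)*ln (1+x/2) = (2*w-1)*ln(1+x) + (1-(2*w-1))*ln (1+x/2)" by simp
    also have "\<dots> \<le> ln((2*w-1)*(1+x) + (1-(2*w-1))*(1+x/2))"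
      using assms False by (intro lnconc) auto
    also have "(2*w-1)*(1+x) + (1-(2*w-1))*(1+x/2) = 1+w*x" by (simp add: algebra_simps)
    finally have "(2*w-1)*ln(1+x) + (2-2*w)*ln (1+x/2) \<le> ln(1+w*x)" .
    moreover have "min w (1-w) = 1-w" using False by simp
    ultimately show ?thesis unfolding e by (simp add: algebra_simps)
  qed
qed

lemma keyD:
  fixes \<sigma> \<rho> \<epsilon> :: real
  assumes "0 < \<epsilon>" "\<epsilon> \<le> \<sigma>" "0 \<le> \<rho>"
  shows "((1-\<rho>)/(1+\<rho>))*ln \<sigma> + ln \<epsilon> + 2*ln(1+\<rho>) \<le> ln((\<sigma>-\<rho>)\<^sup>2+4*\<rho>*\<epsilon>)"
proof -
  have s: "\<sigma> > 0" using assms by linarith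
  have "((1-\<rho>)/(1+\<rho>))*ln \<sigma> = 2*(ln \<sigma>/(1+\<rho>)) - ln \<sigma>"
  proof -
    have "1+\<rho> > 0" using assms by simp
    thus ?thesis by (simp add: divide_simps) (simp add: algebra_simps)
  qed
  thus ?thesis using keyD1[OF assms] keyD2[OF s assms(3)] by linarith
qed

lemma keyDstrict:
  fixes \<sigma> \<rho> \<epsilon> \<eta> S :: real
  assumes "0 < \<epsilon>" "\<epsilon> < 1" "0 \<le> \<rho>" "0 < \<eta>" "1+\<eta> \<le> \<sigma>" "\<sigma> \<le> S"
  shows "((1-\<rho>)/(1+\<rho>))*ln \<sigma> + ln \<epsilon> + 2*ln(1+\<rho>) + min (ln(1+\<eta>/9)) (2*ln(1+\<eta>\<^sup>2/(4*S))/(1+2*S))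
     \<le> ln((\<sigma>-\<rho>)\<^sup>2+4*\<rho>*\<epsilon>)"
proof -
  have s: "\<sigma> > 0" using assms by linarith
  have es: "\<epsilon> \<le> \<sigma>" using assms by linarith
  have eq: "((1-\<rho>)/(1+\<rho>))*ln \<sigma> = 2*(ln \<sigma>/(1+\<rho>)) - ln \<sigma>"
  proof -
    have "1+\<rho> > 0" using assms by simp
    thus ?thesis by (simp add: divide_simps) (simp add: algebra_simps)
  qed
  have D2: "ln \<sigma> / (1+\<rho>) \<le> ln(\<sigma>+\<rho>) - ln(1+\<rho>)" using keyD2[OF s assms(3)] .
  have D1: "ln \<epsilon> + 2*ln(\<sigma>+\<rho>) - ln \<sigma> \<le> ln((\<sigma>-\<rho>)\<^sup>2+4*\<rho>*\<epsilon>)" using keyD1[OF assms(1) es assms(3)] .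
  show ?thesis
  proof (cases "\<rho> \<le> \<sigma>/2 \<or> 2*\<sigma> \<le> \<rho>")
    case True
    have sq: "(\<sigma>+\<rho>)\<^sup>2 \<le> 9*(\<sigma>-\<rho>)\<^sup>2"
    proof -
      have "\<sigma>+\<rho> \<le> 3*\<bar>\<sigma>-\<rho>\<bar>" using True assms by auto
      hence "(\<sigma>+\<rho>)\<^sup>2 \<le> (3*\<bar>\<sigma>-\<rho>\<bar>)\<^sup>2" using s assms by (intro power_mono) auto
      thus ?thesis by (simp add: power_mult_distrib)
    qed
    have se: "\<eta>*\<epsilon> \<le> \<sigma> - \<epsilon>"
    proof -
      have "\<eta>*\<epsilon> \<le> \<eta>" using assms by (simp add: mult_left_le)
      thus ?thesis using assms by linarith
    qed
    have "\<eta>*\<epsilon>*(\<sigma>+\<rho>)\<^sup>2 \<le> \<eta>*\<epsilon>*(9*(\<sigma>-\<rho>)\<^sup>2)" using sq assms by (intro mult_left_mono) auto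
    also have "\<dots> \<le> 9*((\<sigma> - \<epsilon>)*(\<sigma>-\<rho>)\<^sup>2)" using mult_right_mono[OF se, of "(\<sigma>-\<rho>)\<^sup>2"] by (simp add: algebra_simps)
    finally have k: "(1+\<eta>/9)*\<epsilon>*(\<sigma>+\<rho>)\<^sup>2 \<le> \<sigma>*((\<sigma>-\<rho>)\<^sup>2+4*\<rho>*\<epsilon>)"
      by (simp add: algebra_simps power2_eq_square)
    hence "(1+\<eta>/9)*\<epsilon>*(\<sigma>+\<rho>)\<^sup>2 / \<sigma> \<le> (\<sigma>-\<rho>)\<^sup>2+4*\<rho>*\<epsilon>" using s by (simp add: divide_simps mult.commute)
    hence "ln ((1+\<eta>/9)*\<epsilon>*(\<sigma>+\<rho>)\<^sup>2 / \<sigma>) \<le> ln ((\<sigma>-\<rho>)\<^sup>2+4*\<rho>*\<epsilon>)"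
      using s assms by (intro ln_mono) auto
    moreover have "ln ((1+\<eta>/9)*\<epsilon>*(\<sigma>+\<rho>)\<^sup>2 / \<sigma>) = ln(1+\<eta>/9) + ln \<epsilon> + 2*ln(\<sigma>+\<rho>) - ln \<sigma>"
      using s assms by (simp add: ln_mult ln_div ln_realpow)
    moreover have "min (ln(1+\<eta>/9)) (2*ln(1+\<eta>\<^sup>2/(4*S))/(1+2*S)) \<le> ln(1+\<eta>/9)" by simp
    ultimately show ?thesis using eq D2 by linarith
  next
    case False
    define w where "w = 1/(1+\<rho>)"
    define x where "x = \<sigma> - 1"
    have w0: "0 < w" "w \<le> 1" using assms by (auto simp: w_def)
    have x0: "0 \<le> x" using assms by (simp add: x_def)
    have K: "min w (1-w) * ln (1 + x\<^sup>2/(4*(1+x))) \<le> ln(1+w*x) - w*ln(1+x)" using keyK[OF w0 x0] .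
    have S1: "S > 1" using assms by linarith
    have "1+w*x = (\<sigma>+\<rho>)/(1+\<rho>)" using assms by (simp add: w_def x_def field_simps)
    hence e1: "ln(1+w*x) = ln(\<sigma>+\<rho>) - ln(1+\<rho>)" using assms by (simp add: ln_div)
    have e2: "w*ln(1+x) = ln \<sigma>/(1+\<rho>)" by (simp add: w_def x_def)
    have mw: "1/(1+2*S) \<le> min w (1-w)"
    proof -
      have r1: "\<rho> \<le> 2*S" "\<sigma>/2 \<le> \<rho>" using False assms by auto
      have "1/(1+2*S) \<le> w" unfolding w_def using r1 assms by (intro divide_left_mono) auto
      moreover have "1-w = \<rho>/(1+\<rho>)" using assms by (simp add: w_def field_simps)
      moreover have "1/(1+2*S) \<le> \<rho>/(1+\<rho>)"
      proof -
        have "\<rho> \<ge> 1/2" using r1 assms by linarith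
        hence "1/3 \<le> \<rho>/(1+\<rho>)" by (simp add: divide_simps)
        moreover have "1/(1+2*S) \<le> 1/3" using S1 by (simp add: divide_simps)
        ultimately show ?thesis by linarith
      qed
      ultimately show ?thesis by simp
    qed
    have lx: "ln(1+\<eta>\<^sup>2/(4*S)) \<le> ln (1 + x\<^sup>2/(4*(1+x)))"
    proof -
      have "\<eta>\<^sup>2 \<le> x\<^sup>2" using assms x0 by (intro power_mono) (auto simp: x_def)
      hence "\<eta>\<^sup>2/(4*S) \<le> x\<^sup>2/(4*(1+x))" using assms x0 S1
        by (intro frac_le) (auto simp: x_def)
      moreover have p: "0 < 1 + \<eta>\<^sup>2/(4*S)" using S1 by (intro add_pos_nonneg) auto
      ultimately show ?thesis by (subst ln_le_cancel_iff) (use p in auto)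
    qed
    have l0: "0 \<le> ln(1+\<eta>\<^sup>2/(4*S))" using S1 by simp
    have "ln(1+\<eta>\<^sup>2/(4*S))/(1+2*S) = (1/(1+2*S)) * ln(1+\<eta>\<^sup>2/(4*S))" by simp
    also have "\<dots> \<le> min w (1-w) * ln (1 + x\<^sup>2/(4*(1+x)))"
      using mw lx l0 w0 by (intro mult_mono) auto
    finally have "ln(1+\<eta>\<^sup>2/(4*S))/(1+2*S) \<le> ln(\<sigma>+\<rho>) - ln(1+\<rho>) - ln \<sigma>/(1+\<rho>)"
      using K e1 e2 by linarith
    moreover have "min (ln(1+\<eta>/9)) (2*ln(1+\<eta>\<^sup>2/(4*S))/(1+2*S)) \<le> 2*ln(1+\<eta>\<^sup>2/(4*S))/(1+2*S)" by simp
    ultimately show ?thesis using eq D1 by linarith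
  qed
qed

lemma pw:
  fixes b r2 c2 t q \<eta> S :: real
  assumes b: "b > 0" and r: "r2 > 1" and c: "c2 = b\<^sup>2/r2\<^sup>2" and eta: "0 < \<eta>"
  shows "4*ln b + ((1-t\<^sup>2/b\<^sup>2)/(1+t\<^sup>2/b\<^sup>2)) * (ln(q\<^sup>2+c2) - 2*ln b) - 2*ln r2 + 2*ln(1+t\<^sup>2/b\<^sup>2)
     + min (ln(1+\<eta>/9)) (2*ln(1+\<eta>\<^sup>2/(4*S))/(1+2*S)) * indicator {q. 1+\<eta> \<le> (q\<^sup>2+c2)/b\<^sup>2 \<and> (q\<^sup>2+c2)/b\<^sup>2 \<le> S} q
     \<le> ln((t-q)\<^sup>2+c2) + ln((t+q)\<^sup>2+c2)"
proof -
  define \<sigma> where "\<sigma> = (q\<^sup>2+c2)/b\<^sup>2"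
  define \<rho> where "\<rho> = t\<^sup>2/b\<^sup>2"
  define \<epsilon> where "\<epsilon> = 1/r2\<^sup>2"
  have c0: "c2 > 0" using b r by (simp add: c)
  have e0: "0 < \<epsilon>" "\<epsilon> < 1" using r by (auto simp: \<epsilon>_def divide_simps)
  have r0: "0 \<le> \<rho>" by (simp add: \<rho>_def)
  have es: "\<epsilon> \<le> \<sigma>"
  proof -
    have "\<epsilon> = c2/b\<^sup>2" using b by (simp add: c \<epsilon>_def)
    also have "\<dots> \<le> \<sigma>" unfolding \<sigma>_def using b by (intro divide_right_mono) auto
    finally show ?thesis .
  qed
  have lsig: "ln \<sigma> = ln(q\<^sup>2+c2) - 2*ln b"
  proof -
    have "q\<^sup>2+c2 > 0" using c0 by (simp add: add_nonneg_pos)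
    thus ?thesis using b by (simp add: \<sigma>_def ln_div ln_realpow)
  qed
  have leps: "ln \<epsilon> = - 2*ln r2" using r by (simp add: \<epsilon>_def ln_div ln_realpow)
  have prod: "((t-q)\<^sup>2+c2)*((t+q)\<^sup>2+c2) = b^4*((\<sigma>-\<rho>)\<^sup>2+4*\<rho>*\<epsilon>)"
  proof -
    have e1: "b\<^sup>2*(\<sigma>-\<rho>) = q\<^sup>2+c2-t\<^sup>2" using b by (simp add: \<sigma>_def \<rho>_def field_simps)
    have e2: "b^4*(4*\<rho>*\<epsilon>) = 4*t\<^sup>2*c2" using b r by (simp add: \<rho>_def \<epsilon>_def c field_simps power2_eq_square power4_eq_xxxx)
    have "b^4*((\<sigma>-\<rho>)\<^sup>2+4*\<rho>*\<epsilon>) = (b\<^sup>2*(\<sigma>-\<rho>))\<^sup>2 + b^4*(4*\<rho>*\<epsilon>)"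
      by (simp add: power2_eq_square algebra_simps power4_eq_xxxx)
    also have "\<dots> = (q\<^sup>2+c2-t\<^sup>2)\<^sup>2 + 4*t\<^sup>2*c2" using e1 e2 by simp
    also have "\<dots> = ((t-q)\<^sup>2+c2)*((t+q)\<^sup>2+c2)" by (simp add: power2_eq_square algebra_simps)
    finally show ?thesis by simp
  qed
  have p1: "(t-q)\<^sup>2+c2 > 0" "(t+q)\<^sup>2+c2 > 0" using c0 by (auto intro: add_nonneg_pos)
  have p2: "(\<sigma>-\<rho>)\<^sup>2+4*\<rho>*\<epsilon> > 0"
  proof -
    have "b^4*((\<sigma>-\<rho>)\<^sup>2+4*\<rho>*\<epsilon>) > 0" using p1 prod by (metis mult_pos_pos)
    thus ?thesis using b by (simp add: zero_less_mult_iff)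
  qed
  have lsum: "ln((t-q)\<^sup>2+c2) + ln((t+q)\<^sup>2+c2) = 4*ln b + ln((\<sigma>-\<rho>)\<^sup>2+4*\<rho>*\<epsilon>)"
  proof -
    have "ln((t-q)\<^sup>2+c2) + ln((t+q)\<^sup>2+c2) = ln(((t-q)\<^sup>2+c2)*((t+q)\<^sup>2+c2))" using p1 by (simp add: ln_mult)
    also have "\<dots> = ln (b^4) + ln((\<sigma>-\<rho>)\<^sup>2+4*\<rho>*\<epsilon>)" unfolding prod using b p2 by (simp add: ln_mult)
    also have "ln (b^4) = 4 * ln b" using b by (simp add: ln_realpow)
    finally show ?thesis .
  qed
  show ?thesis
  proof (cases "1+\<eta> \<le> \<sigma> \<and> \<sigma> \<le> S")
    case True
    have "((1-\<rho>)/(1+\<rho>))*ln \<sigma> + ln \<epsilon> + 2*ln(1+\<rho>) + min (ln(1+\<eta>/9)) (2*ln(1+\<eta>\<^sup>2/(4*S))/(1+2*S))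
     \<le> ln((\<sigma>-\<rho>)\<^sup>2+4*\<rho>*\<epsilon>)" using keyDstrict[OF e0 r0 eta] True by blast
    moreover have "indicator {q. 1+\<eta> \<le> (q\<^sup>2+c2)/b\<^sup>2 \<and> (q\<^sup>2+c2)/b\<^sup>2 \<le> S} q = (1::real)"
      using True by (simp add: \<sigma>_def indicator_def)
    ultimately show ?thesis using lsum lsig leps unfolding \<rho>_def by simp
  next
    case False
    have "((1-\<rho>)/(1+\<rho>))*ln \<sigma> + ln \<epsilon> + 2*ln(1+\<rho>) \<le> ln((\<sigma>-\<rho>)\<^sup>2+4*\<rho>*\<epsilon>)"
      using keyD[OF e0(1) es r0] .
    moreover have "indicator {q. 1+\<eta> \<le> (q\<^sup>2+c2)/b\<^sup>2 \<and> (q\<^sup>2+c2)/b\<^sup>2 \<le> S} q = (0::real)"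
      using False by (simp add: \<sigma>_def indicator_def)
    ultimately show ?thesis using lsum lsig leps unfolding \<rho>_def by simp
  qed
qed

lemma logratio:
  fixes t q c2 :: real
  assumes c0: "c2 > 0"
  shows "\<bar>ln((t-q)\<^sup>2+c2) - ln(q\<^sup>2+c2)\<bar> \<le> ln(2+2*t\<^sup>2/c2)"
proof -
  define K where "K = 2+2*t\<^sup>2/c2"
  have X: "(t-q)\<^sup>2+c2 > 0" "q\<^sup>2+c2 > 0" using c0 by (auto intro: add_nonneg_pos)
  have K1: "K \<ge> 1" using c0 by (simp add: K_def)
  have h1: "(t-q)\<^sup>2+c2 \<le> K*(q\<^sup>2+c2)"
  proof -
    have "2*t\<^sup>2 + 2*q\<^sup>2 - (t-q)\<^sup>2 = (t+q)\<^sup>2" by (simp add: power2_eq_square algebra_simps)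
    hence "(t-q)\<^sup>2 \<le> 2*t\<^sup>2 + 2*q\<^sup>2" by (metis diff_ge_0_iff_ge zero_le_power2)
    moreover have "K*(q\<^sup>2+c2) = 2*q\<^sup>2 + 2*c2 + 2*t\<^sup>2*q\<^sup>2/c2 + 2*t\<^sup>2" using c0 by (simp add: K_def field_simps)
    moreover have "2*t\<^sup>2*q\<^sup>2/c2 \<ge> 0" using c0 by simp
    ultimately show ?thesis using c0 by linarith
  qed
  have h2: "q\<^sup>2+c2 \<le> K*((t-q)\<^sup>2+c2)"
  proof -
    have "2*t\<^sup>2 + 2*(t-q)\<^sup>2 - q\<^sup>2 = (2*t-q)\<^sup>2" by (simp add: power2_eq_square algebra_simps)
    hence "q\<^sup>2 \<le> 2*t\<^sup>2 + 2*(t-q)\<^sup>2" by (metis diff_ge_0_iff_ge zero_le_power2)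
    moreover have "K*((t-q)\<^sup>2+c2) = 2*(t-q)\<^sup>2 + 2*c2 + 2*t\<^sup>2*(t-q)\<^sup>2/c2 + 2*t\<^sup>2" using c0 by (simp add: K_def field_simps)
    moreover have "2*t\<^sup>2*(t-q)\<^sup>2/c2 \<ge> 0" using c0 by simp
    ultimately show ?thesis using c0 by linarith
  qed
  have K0: "K > 0" using K1 by linarith
  have "ln((t-q)\<^sup>2+c2) \<le> ln (K*(q\<^sup>2+c2))" using h1 X K0 by (subst ln_le_cancel_iff) auto
  also have "\<dots> = ln K + ln(q\<^sup>2+c2)" using X K0 by (simp add: ln_mult)
  finally have l1: "ln((t-q)\<^sup>2+c2) \<le> ln K + ln(q\<^sup>2+c2)" .
  have "ln(q\<^sup>2+c2) \<le> ln (K*((t-q)\<^sup>2+c2))" using h2 X K0 by (subst ln_le_cancel_iff) auto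
  also have "\<dots> = ln K + ln((t-q)\<^sup>2+c2)" using X K0 by (simp add: ln_mult)
  finally have l2: "ln(q\<^sup>2+c2) \<le> ln K + ln((t-q)\<^sup>2+c2)" .
  from l1 l2 show ?thesis unfolding K_def by linarith
qed


theorem proposition5p3:
  fixes \<mu> :: "real measure" and E :: real and \<zeta> :: complex
  assumes prob: "prob_space \<mu>"
    and sets_mu: "sets \<mu> = sets borel"
    and symmetric: "distr \<mu> borel uminus = \<mu>"
    and log_moment: "integrable \<mu> (\<lambda>q. ln (1 + q\<^sup>2))"
    and second_moment_pos: "(\<integral>\<^sup>+ q. ennreal (q\<^sup>2) \<partial>\<mu>) > 0"
    and not_single_point: "\<not> (\<exists>c. AE q in \<mu>. q\<^sup>2 = c)"
    and upper: "Im \<zeta> > 0"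
    and abs_gt1: "cmod \<zeta> > 1"
    and re_zero: "Re (\<zeta> + 1 / \<zeta> + of_real E) = 0"
    and lyap_int: "integrable \<mu> (\<lambda>q. ln ((cmod (alpha \<zeta> (q - E)))\<^sup>2))"
    and lyap_zero: "(\<integral> q. ln ((cmod (alpha \<zeta> (q - E)))\<^sup>2) \<partial>\<mu>) = 0"
  shows "(INF w::real. ereal (\<integral> q. ln ((cmod \<zeta>)\<^sup>2 * (cmod (of_real w + 1 / \<zeta> - of_real (q - E)))\<^sup>2
                                   / (cmod (of_real w - \<zeta>))\<^sup>2) \<partial>\<mu>)) > 0"
proof -
  interpret P: prob_space \<mu> by (rule prob)
  have sp: "space \<mu> = UNIV" using sets_eq_imp_space_eq[OF sets_mu] by simp
  have pU: "measure \<mu> UNIV = 1" using P.prob_space sp by simp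
  have mc: "borel_measurable \<mu> = borel_measurable borel" by (rule measurable_cong_sets[OF sets_mu refl])
  define a where "a = Re \<zeta>"
  define b where "b = Im \<zeta>"
  define r2 where "r2 = a\<^sup>2 + b\<^sup>2"
  have b0: "b > 0" using upper by (simp add: b_def)
  have r2c: "r2 = (cmod \<zeta>)\<^sup>2" by (simp add: r2_def a_def b_def cmod_power2)
  have r21: "r2 > 1"
  proof -
    have "1 < cmod \<zeta> * cmod \<zeta>" using abs_gt1 by (metis less_1_mult)
    thus ?thesis by (simp add: r2c power2_eq_square)
  qed
  define c2 where "c2 = b\<^sup>2/r2\<^sup>2"
  have c0: "c2 > 0" using b0 r21 by (simp add: c2_def)
  have Eeq: "E = -a - a/r2"
  proof -
    have "Re (1/\<zeta>) = a/r2" using cmod_power2[of \<zeta>] by (simp add: Re_divide r2c a_def)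
    thus ?thesis using re_zero by (simp add: a_def)
  qed
  have alpha_eq: "(cmod (alpha \<zeta> (q-E)))\<^sup>2 = (q\<^sup>2+c2)/b\<^sup>2" for q
  proof -
    have "(cmod (alpha \<zeta> (q-E)))\<^sup>2 = ((a + a/r2 - (q-E))/b)\<^sup>2 + (1/r2)\<^sup>2"
      by (simp add: alpha_def cmod_power2 a_def b_def r2_def)
    also have "\<dots> = (q\<^sup>2+c2)/b\<^sup>2" using b0 r21 by (simp add: Eeq c2_def power_divide add_divide_distrib)
    finally show ?thesis .
  qed
  define lg where "lg q = ln(q\<^sup>2+c2) - 2*ln b" for q
  have qc0: "q\<^sup>2+c2 > 0" for q using c0 by (simp add: add_nonneg_pos)
  have ell_eq: "ln ((cmod (alpha \<zeta> (q-E)))\<^sup>2) = lg q" for q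
    using b0 qc0[of q] by (simp add: alpha_eq lg_def ln_div ln_realpow)
  have int_ell: "integrable \<mu> lg" using lyap_int by (simp add: ell_eq)
  have ell0: "integral\<^sup>L \<mu> lg = 0" using lyap_zero by (simp add: ell_eq)
  have intlog: "integrable \<mu> (\<lambda>q. ln(q\<^sup>2+c2))"
  proof -
    have "integrable \<mu> (\<lambda>q. lg q + 2*ln b)" using int_ell by simp
    thus ?thesis by (simp add: lg_def)
  qed
  have intL: "integrable \<mu> (\<lambda>q. ln((t-q)\<^sup>2+c2))" for t
  proof -
    have "integrable \<mu> (\<lambda>q. ln((t-q)\<^sup>2+c2) - ln(q\<^sup>2+c2))"
      by (rule P.integrable_const_bound[where B="ln(2+2*t\<^sup>2/c2)"])
        (use logratio[OF c0] in \<open>auto simp: mc\<close>)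
    from Bochner_Integration.integrable_add[OF this intlog] show ?thesis by simp
  qed
  have sym: "(\<integral>q. f (-q) \<partial>\<mu>) = integral\<^sup>L \<mu> f" if f: "f \<in> borel_measurable borel" for f :: "real \<Rightarrow> real"
  proof -
    have um: "uminus \<in> measurable \<mu> borel" by (simp add: mc)
    have "integral\<^sup>L (distr \<mu> borel uminus) f = (\<integral>q. f (-q) \<partial>\<mu>)" by (rule integral_distr[OF um f])
    thus ?thesis using symmetric by simp
  qed
  define A where "A \<eta> S = {q::real. 1+\<eta> \<le> (q\<^sup>2+c2)/b\<^sup>2 \<and> (q\<^sup>2+c2)/b\<^sup>2 \<le> S}" for \<eta> S :: real
  have Ab: "A \<eta> S \<in> sets borel" for \<eta> S unfolding A_def by measurable
  have Am: "A \<eta> S \<in> sets \<mu>" for \<eta> S using Ab sets_mu by simp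
  have lg_sig: "lg q = ln ((q\<^sup>2+c2)/b\<^sup>2)" for q
    using b0 qc0[of q] by (simp add: lg_def ln_div ln_realpow)
  have ex: "\<exists>\<eta> S. 0 < \<eta> \<and> 0 < measure \<mu> (A \<eta> S)"
  proof (rule ccontr)
    assume H: "\<not> ?thesis"
    have AEn: "AE q in \<mu>. q \<notin> A (1/Suc n) (Suc (Suc n))" for n::nat
    proof -
      have np: "0 < 1/real (Suc n)" by simp
      have "\<not> 0 < measure \<mu> (A (1/Suc n) (Suc (Suc n)))" using H np by blast
      hence "measure \<mu> (A (1/Suc n) (Suc (Suc n))) = 0" using measure_nonneg[of \<mu> "A (1/Suc n) (Suc (Suc n))"]
        by linarith
      hence "emeasure \<mu> (A (1/Suc n) (Suc (Suc n))) = 0" by (simp add: P.emeasure_eq_measure)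
      hence "A (1/Suc n) (Suc (Suc n)) \<in> null_sets \<mu>" using Am by (intro null_setsI) auto
      thus ?thesis by (rule AE_I') auto
    qed
    hence "AE q in \<mu>. \<forall>n. q \<notin> A (1/Suc n) (Suc (Suc n))" by (simp add: AE_all_countable)
    hence AEle: "AE q in \<mu>. (q\<^sup>2+c2)/b\<^sup>2 \<le> 1"
    proof (rule AE_mp, intro AE_I2 impI)
      fix q assume h: "\<forall>n. q \<notin> A (1/Suc n) (Suc (Suc n))"
      show "(q\<^sup>2+c2)/b\<^sup>2 \<le> 1"
      proof (rule ccontr)
        define \<sigma> where "\<sigma> = (q\<^sup>2+c2)/b\<^sup>2"
        assume "\<not> (q\<^sup>2+c2)/b\<^sup>2 \<le> 1"
        hence s1: "\<sigma> > 1" by (simp add: \<sigma>_def)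
        have "\<exists>n. inverse (real (Suc n)) < \<sigma> - 1" using reals_Archimedean[of "\<sigma> - 1"] s1 by simp
        then obtain n1 where n1: "inverse (real (Suc n1)) < \<sigma> - 1" by blast
        obtain n2 where n2: "\<sigma> \<le> real n2" using real_arch_simple by auto
        define n where "n = max n1 n2"
        have "1/real (Suc n) \<le> 1/real (Suc n1)" unfolding n_def by (intro divide_left_mono) auto
        hence "1 + 1/real (Suc n) \<le> \<sigma>" using n1 by (simp add: inverse_eq_divide)
        moreover have "\<sigma> \<le> real (Suc (Suc n))" using n2 unfolding n_def by simp
        ultimately have "q \<in> A (1/Suc n) (Suc (Suc n))" by (simp add: A_def \<sigma>_def)
        thus False using h by blast
      qed
    qed
    have AEnn: "AE q in \<mu>. 0 \<le> - lg q"
      using AEle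
    proof (rule AE_mp, intro AE_I2 impI)
      fix q assume "(q\<^sup>2+c2)/b\<^sup>2 \<le> 1"
      moreover have "(q\<^sup>2+c2)/b\<^sup>2 > 0" using qc0[of q] b0 by simp
      ultimately show "0 \<le> - lg q" by (simp add: lg_sig)
    qed
    have "integral\<^sup>L \<mu> (\<lambda>q. - lg q) = 0" using ell0 by simp
    hence "AE q in \<mu>. - lg q = 0"
      using integral_nonneg_eq_0_iff_AE[of \<mu> "\<lambda>q. - lg q"] int_ell AEnn by simp
    hence "AE q in \<mu>. q\<^sup>2 = b\<^sup>2 - c2"
    proof (rule AE_mp, intro AE_I2 impI)
      fix q assume "- lg q = 0"
      hence "ln ((q\<^sup>2+c2)/b\<^sup>2) = 0" by (simp add: lg_sig)
      hence "(q\<^sup>2+c2)/b\<^sup>2 = 1" using qc0[of q] b0 by simp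
      thus "q\<^sup>2 = b\<^sup>2 - c2" using b0 by (simp add: field_simps)
    qed
    thus False using not_single_point by blast
  qed
  then obtain \<eta> S where eta: "0 < \<eta>" and posA: "0 < measure \<mu> (A \<eta> S)" by blast
  have S1: "S \<ge> 1 + \<eta>"
  proof (rule ccontr)
    assume "\<not> S \<ge> 1 + \<eta>"
    hence "A \<eta> S = {}" by (auto simp: A_def)
    thus False using posA by simp
  qed
  define m where "m = min (ln(1+\<eta>/9)) (2*ln(1+\<eta>\<^sup>2/(4*S))/(1+2*S))"
  have m0: "m > 0"
  proof -
    have "ln(1+\<eta>/9) > 0" using eta by simp
    moreover have "0 < \<eta>\<^sup>2/(4*S)" using eta S1 by (intro divide_pos_pos) auto
    hence "ln(1+\<eta>\<^sup>2/(4*S)) > 0" by (intro ln_gt_zero) auto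
    hence "2*ln(1+\<eta>\<^sup>2/(4*S))/(1+2*S) > 0" using eta S1 by simp
    ultimately show ?thesis by (simp add: m_def)
  qed
  define \<delta> where "\<delta> = m * measure \<mu> (A \<eta> S) / 2"
  have d0: "\<delta> > 0" using m0 posA by (simp add: \<delta>_def)
  have bound: "\<delta> \<le> (\<integral> q. ln ((cmod \<zeta>)\<^sup>2 * (cmod (of_real w + 1 / \<zeta> - of_real (q - E)))\<^sup>2
                                   / (cmod (of_real w - \<zeta>))\<^sup>2) \<partial>\<mu>)" for w
  proof -
    define t where "t = w - a"
    define \<rho> where "\<rho> = t\<^sup>2/b\<^sup>2"
    define L where "L q = ln((t-q)\<^sup>2+c2)" for q
    have Re1: "Re (1/\<zeta>) = a/r2" using cmod_power2[of \<zeta>] by (simp add: Re_divide r2c a_def)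
    have Im1: "Im (1/\<zeta>) = -b/r2" using cmod_power2[of \<zeta>] by (simp add: Im_divide r2c b_def)
    have cm1: "(cmod (of_real w + 1 / \<zeta> - of_real (q - E)))\<^sup>2 = (t-q)\<^sup>2 + c2" for q
    proof -
      have "(cmod (of_real w + 1 / \<zeta> - of_real (q - E)))\<^sup>2 = (w + a/r2 - (q - E))\<^sup>2 + (-b/r2)\<^sup>2"
        by (simp add: cmod_power2 Re1 Im1)
      also have "\<dots> = (t-q)\<^sup>2 + c2" by (simp add: Eeq t_def c2_def power_divide) (simp add: algebra_simps)
      finally show ?thesis .
    qed
    have cm2: "(cmod (of_real w - \<zeta>))\<^sup>2 = t\<^sup>2 + b\<^sup>2"
      by (simp add: cmod_power2 t_def a_def b_def)
    have tb: "t\<^sup>2 + b\<^sup>2 > 0" using b0 by (simp add: add_nonneg_pos)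
    have Lp: "(t-q)\<^sup>2+c2 > 0" for q using c0 by (simp add: add_nonneg_pos)
    have geq: "ln ((cmod \<zeta>)\<^sup>2 * (cmod (of_real w + 1 / \<zeta> - of_real (q - E)))\<^sup>2 / (cmod (of_real w - \<zeta>))\<^sup>2)
        = (ln r2 - ln(t\<^sup>2+b\<^sup>2)) + L q" for q
      unfolding cm1 cm2 r2c[symmetric] using r21 tb Lp[of q] b0 by (simp add: L_def ln_div ln_mult)
    have intLt: "integrable \<mu> L" using intL[of t] by (simp add: L_def[abs_def])
    have intLm: "integrable \<mu> (\<lambda>q. L (-q))"
    proof -
      have "(\<lambda>q. L (-q)) = (\<lambda>q. ln((-t-q)\<^sup>2+c2))"
        by (rule ext) (simp add: L_def power2_eq_square algebra_simps)
      thus ?thesis using intL[of "-t"] by simp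
    qed
    have Lmeas: "L \<in> borel_measurable borel" unfolding L_def[abs_def] by measurable
    have symL: "(\<integral>q. L (-q) \<partial>\<mu>) = integral\<^sup>L \<mu> L" by (rule sym[OF Lmeas])
    define lam where "lam = (1-t\<^sup>2/b\<^sup>2)/(1+t\<^sup>2/b\<^sup>2)"
    define C where "C = 4*ln b - 2*ln r2 + 2*ln(1+t\<^sup>2/b\<^sup>2)"
    define R where "R q = C + lam * lg q + m * indicator (A \<eta> S) q" for q
    have Rle: "R q \<le> L q + L (-q)" for q
    proof -
      have "4*ln b + lam * (ln(q\<^sup>2+c2) - 2*ln b) - 2*ln r2 + 2*ln(1+t\<^sup>2/b\<^sup>2)
     + m * indicator (A \<eta> S) q \<le> ln((t-q)\<^sup>2+c2) + ln((t+q)\<^sup>2+c2)"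
        unfolding lam_def m_def A_def by (rule pw[OF b0 r21 c2_def eta])
      moreover have "R q = 4*ln b + lam * (ln(q\<^sup>2+c2) - 2*ln b) - 2*ln r2 + 2*ln(1+t\<^sup>2/b\<^sup>2)
     + m * indicator (A \<eta> S) q" by (simp add: R_def C_def lg_def)
      moreover have "L q + L (-q) = ln((t-q)\<^sup>2+c2) + ln((t+q)\<^sup>2+c2)" by (simp add: L_def)
      ultimately show ?thesis by linarith
    qed
    have meas_fin: "emeasure \<mu> (A \<eta> S) < \<infinity>" by (simp add: P.emeasure_eq_measure)
    have intI: "integrable \<mu> (indicator (A \<eta> S) :: real \<Rightarrow> real)"
      using Am meas_fin by simp
    have intR: "integrable \<mu> R"
      unfolding R_def using int_ell intI by simp
    have IR: "integral\<^sup>L \<mu> R = C + m * measure \<mu> (A \<eta> S)"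
    proof -
      have "integral\<^sup>L \<mu> R = integral\<^sup>L \<mu> (\<lambda>q. C) + integral\<^sup>L \<mu> (\<lambda>q. lam * lg q) + integral\<^sup>L \<mu> (\<lambda>q. m * indicator (A \<eta> S) q)"
        unfolding R_def using int_ell intI
        by (subst Bochner_Integration.integral_add; simp)+
      also have "\<dots> = C + m * measure \<mu> (A \<eta> S)"
        using ell0 sp pU by simp
      finally show ?thesis .
    qed
    have "integral\<^sup>L \<mu> R \<le> (\<integral>q. L q + L (-q) \<partial>\<mu>)"
      by (rule integral_mono[OF intR Bochner_Integration.integrable_add[OF intLt intLm] Rle])
    also have "\<dots> = 2 * integral\<^sup>L \<mu> L"
      using intLt intLm symL by simp
    finally have key: "C + m * measure \<mu> (A \<eta> S) \<le> 2 * integral\<^sup>L \<mu> L" using IR by simp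
    have "(\<integral> q. ln ((cmod \<zeta>)\<^sup>2 * (cmod (of_real w + 1 / \<zeta> - of_real (q - E)))\<^sup>2
                                   / (cmod (of_real w - \<zeta>))\<^sup>2) \<partial>\<mu>) = (ln r2 - ln(t\<^sup>2+b\<^sup>2)) + integral\<^sup>L \<mu> L"
    proof -
      have i1: "(\<integral>q. (ln r2 - ln(t\<^sup>2+b\<^sup>2)) + L q \<partial>\<mu>) = (\<integral>q. (ln r2 - ln(t\<^sup>2+b\<^sup>2)) \<partial>\<mu>) + integral\<^sup>L \<mu> L"
        by (rule Bochner_Integration.integral_add) (simp_all add: intLt)
      have i2: "(\<integral>q. (ln r2 - ln(t\<^sup>2+b\<^sup>2)) \<partial>\<mu>) = ln r2 - ln(t\<^sup>2+b\<^sup>2)"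
        using sp pU by simp
      show ?thesis unfolding geq i1 i2 ..
    qed
    moreover have "ln(t\<^sup>2+b\<^sup>2) = 2*ln b + ln(1+t\<^sup>2/b\<^sup>2)"
    proof -
      have "t\<^sup>2+b\<^sup>2 = b\<^sup>2 * (1+t\<^sup>2/b\<^sup>2)" using b0 by (simp add: field_simps)
      moreover have "1+t\<^sup>2/b\<^sup>2 > 0" by (simp add: add_pos_nonneg)
      ultimately show ?thesis using b0 by (simp add: ln_mult ln_realpow)
    qed
    ultimately show ?thesis using key unfolding \<delta>_def C_def by linarith
  qed
  have "ereal \<delta> \<le> (INF w::real. ereal (\<integral> q. ln ((cmod \<zeta>)\<^sup>2 * (cmod (of_real w + 1 / \<zeta> - of_real (q - E)))\<^sup>2
                                   / (cmod (of_real w - \<zeta>))\<^sup>2) \<partial>\<mu>))"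
    by (rule INF_greatest, unfold ereal_less_eq, rule bound)
  moreover have "0 < ereal \<delta>" using d0 by simp
  ultimately show ?thesis by (rule order.strict_trans2[rotated])
qed

end
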